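(* Let $\lambda_1,\lambda_2,\lambda_1',\lambda_2',\sigma_1,\sigma_2,\sigma_1',\sigma_2'\in\mathbb{C}^*$ and $\eta_1,\eta_2,\eta_1',\eta_2'\in\mathbb{C}$ with $\lambda_1\neq\lambda_2$ and $\lambda_1'\neq\lambda_2'$. Then the irreducible $\mathcal{G}$-modules $\Omega(\lambda_1,\eta_1,\sigma_1,0)\otimes\Omega(\lambda_2,\eta_2,\sigma_2,0)$ and $\Omega(\lambda_1',\eta_1',\sigma_1',0)\otimes\Omega(\lambda_2',\eta_2',\sigma_2',0)$ are isomorphic if and only if either $(\lambda_1,\eta_1,\sigma_1)=(\lambda_1',\eta_1',\sigma_1')$ and $(\lambda_2,\eta_2,\sigma_2)=(\lambda_2',\eta_2',\sigma_2')$, or $(\lambda_1,\eta_1,\sigma_1)=(\lambda_2',\eta_2',\sigma_2')$ and $(\lambda_2,\eta_2,\sigma_2)=(\lambda_1',\eta_1',\sigma_1')$.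
   Context: The planar Galilean conformal algebra $\mathcal{G}$ is the complex Lie algebra with basis $\{L_m,H_m,I_m,J_m\mid m\in\mathbb{Z}\}$ and brackets $[L_m,L_n]=(n-m)L_{m+n}$, $[L_m,H_n]=nH_{m+n}$, $[L_m,I_n]=(n-m)I_{m+n}$, $[L_m,J_n]=(n-m)J_{m+n}$, $[H_m,I_n]=I_{m+n}$, $[H_m,J_n]=-J_{m+n}$, and $[H_m,H_n]=[I_m,I_n]=[J_m,J_n]=[I_m,J_n]=0$ for all $m,n\in\mathbb{Z}$. For $\lambda,\sigma\in\mathbb{C}^*$, $\eta\in\mathbb{C}$, the module $\Omega(\lambda,\eta,\sigma,0)$ is $\mathbb{C}[X,Y]$ with $L_m f(X,Y)=\lambda^m(Y-mX+m\eta)f(X,Y-m)$, $H_m f(X,Y)=\lambda^m X f(X,Y-m)$, $I_m f(X,Y)=\lambda^m\sigma f(X-1,Y-m)$, $J_m f(X,Y)=0$. The tensor product of $\mathcal{G}$-modules has action $x(v\otimes w)=xv\otimes w+v\otimes xw$. (When $\lambda_1\neq\lambda_2$ these tensor products are irreducible.) *)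

theory Defs
  imports Complex_Main
begin

text \<open>Basis elements of the planar Galilean conformal algebra: L_m, H_m, I_m, J_m (m integer).
  A G-module action is determined by the action of the basis elements (by linearity).\<close>
datatype gca_basis = L int | H int | I int | J int

text \<open>Polynomial functions in four complex variables (X1,Y1,X2,Y2).  Since the field
  is infinite, these are in canonical bijection with C[X1,Y1,X2,Y2], which is
  canonically C[X1,Y1] tensor C[X2,Y2].\<close>
inductive_set polyfun4 :: "(complex \<times> complex \<times> complex \<times> complex \<Rightarrow> complex) set" where
  pf_const: "(\<lambda>_. c) \<in> polyfun4"
| pf_X1: "(\<lambda>(x1,y1,x2,y2). x1) \<in> polyfun4"
| pf_Y1: "(\<lambda>(x1,y1,x2,y2). y1) \<in> polyfun4"
| pf_X2: "(\<lambda>(x1,y1,x2,y2). x2) \<in> polyfun4"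
| pf_Y2: "(\<lambda>(x1,y1,x2,y2). y2) \<in> polyfun4"
| pf_add: "f \<in> polyfun4 \<Longrightarrow> g \<in> polyfun4 \<Longrightarrow> (\<lambda>v. f v + g v) \<in> polyfun4"
| pf_mult: "f \<in> polyfun4 \<Longrightarrow> g \<in> polyfun4 \<Longrightarrow> (\<lambda>v. f v * g v) \<in> polyfun4"

text \<open>Action of a basis element on Omega(lambda, eta, sigma, 0), realised on (polynomial)
  functions f(X,Y).\<close>
definition omega_act :: "complex \<Rightarrow> complex \<Rightarrow> complex \<Rightarrow> gca_basis
    \<Rightarrow> (complex \<times> complex \<Rightarrow> complex) \<Rightarrow> (complex \<times> complex \<Rightarrow> complex)" where
  "omega_act lam eta sig g f = (case g of
      L m \<Rightarrow> (\<lambda>(x,y). lam powi m * (y - of_int m * x + of_int m * eta) * f (x, y - of_int m))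
    | H m \<Rightarrow> (\<lambda>(x,y). lam powi m * x * f (x, y - of_int m))
    | I m \<Rightarrow> (\<lambda>(x,y). lam powi m * sig * f (x - 1, y - of_int m))
    | J m \<Rightarrow> (\<lambda>_. 0))"

text \<open>Action on the tensor product Omega(l1,e1,s1,0) (x) Omega(l2,e2,s2,0):
  x(v (x) w) = xv (x) w + v (x) xw, i.e. the first factor acts on (X1,Y1),
  the second on (X2,Y2).\<close>
definition tensor_act :: "complex \<times> complex \<times> complex \<Rightarrow> complex \<times> complex \<times> complex \<Rightarrow> gca_basis
    \<Rightarrow> (complex \<times> complex \<times> complex \<times> complex \<Rightarrow> complex)
    \<Rightarrow> (complex \<times> complex \<times> complex \<times> complex \<Rightarrow> complex)" where
  "tensor_act p1 p2 g F = (case p1 of (l1,e1,s1) \<Rightarrow> case p2 of (l2,e2,s2) \<Rightarrow>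
      (\<lambda>(x1,y1,x2,y2).
          omega_act l1 e1 s1 g (\<lambda>(a,b). F (a,b,x2,y2)) (x1,y1)
        + omega_act l2 e2 s2 g (\<lambda>(a,b). F (x1,y1,a,b)) (x2,y2)))"

definition tensor_modules_iso :: "complex \<times> complex \<times> complex \<Rightarrow> complex \<times> complex \<times> complex
    \<Rightarrow> complex \<times> complex \<times> complex \<Rightarrow> complex \<times> complex \<times> complex \<Rightarrow> bool" where
  "tensor_modules_iso p1 p2 q1 q2 \<longleftrightarrow>
     (\<exists>\<phi>. bij_betw \<phi> polyfun4 polyfun4
        \<and> (\<forall>a b f g. f \<in> polyfun4 \<longrightarrow> g \<in> polyfun4 \<longrightarrow>
              \<phi> (\<lambda>v. a * f v + b * g v) = (\<lambda>v. a * \<phi> f v + b * \<phi> g v))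
        \<and> (\<forall>x f. f \<in> polyfun4 \<longrightarrow> \<phi> (tensor_act p1 p2 x f) = tensor_act q1 q2 x (\<phi> f)))"

end

theory Submission
  imports Defs "HOL-Library.Product_Plus"
begin


fun Dc :: "nat \<Rightarrow> ('a::ab_group_add \<Rightarrow> complex) set" where
  "Dc 0 = {\<lambda>_. 0}"
| "Dc (Suc n) = {f. \<forall>u. (\<lambda>x. f (x + u) - f x) \<in> Dc n}"

lemma Dc_zero: "(\<lambda>_. 0) \<in> Dc n"
  by (induction n) auto

lemma Dc_mono: "f \<in> Dc n \<Longrightarrow> f \<in> Dc (Suc n)"
proof (induction n arbitrary: f)
  case 0 then show ?case by (auto intro: Dc_zero)
next
  case (Suc n) then show ?case by auto
qed

lemma Dc_mono_le: "n \<le> k \<Longrightarrow> f \<in> Dc n \<Longrightarrow> f \<in> Dc k"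
proof (induction k rule: dec_induct)
  case base then show ?case by simp
next
  case (step m) then show ?case using Dc_mono by blast
qed

lemma Dc_lin: "f \<in> Dc n \<Longrightarrow> g \<in> Dc n \<Longrightarrow> (\<lambda>x. a * f x + b * g x) \<in> Dc n"
proof (induction n arbitrary: f g)
  case 0 then show ?case by auto
next
  case (Suc n)
  show ?case
  proof (simp, intro allI)
    fix u
    have "(\<lambda>x. a * (f (x + u) - f x) + b * (g (x + u) - g x)) \<in> Dc n"
      using Suc by auto
    moreover have "(\<lambda>x. a * (f (x + u) - f x) + b * (g (x + u) - g x)) =
      (\<lambda>x. a * f (x + u) + b * g (x + u) - (a * f x + b * g x))"
      by (auto simp: algebra_simps)
    ultimately show "(\<lambda>x. a * f (x + u) + b * g (x + u) - (a * f x + b * g x)) \<in> Dc n" by simp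
  qed
qed

lemma Dc_add: "f \<in> Dc n \<Longrightarrow> g \<in> Dc n \<Longrightarrow> (\<lambda>x. f x + g x) \<in> Dc n"
  using Dc_lin[of f n g 1 1] by simp

lemma Dc_smult: "f \<in> Dc n \<Longrightarrow> (\<lambda>x. a * f x) \<in> Dc n"
  using Dc_lin[of f n f a 0] by simp

lemma Dc_comp:
  assumes "\<And>y w. h (y + w) = h y + Lf w"
  shows "f \<in> Dc n \<Longrightarrow> (\<lambda>y. f (h y)) \<in> Dc n"
proof (induction n arbitrary: f)
  case 0 then show ?case by auto
next
  case (Suc n)
  show ?case
  proof (simp, intro allI)
    fix u
    have "(\<lambda>x. f (x + Lf u) - f x) \<in> Dc n" using Suc.prems by auto
    from Suc.IH[OF this] show "(\<lambda>x. f (h (x + u)) - f (h x)) \<in> Dc n" by (simp add: assms)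
  qed
qed

lemma Dc_shift: "f \<in> Dc n \<Longrightarrow> (\<lambda>x. f (x + w)) \<in> Dc n"
  by (rule Dc_comp[where Lf="\<lambda>w. w"]) (auto simp: algebra_simps)

lemma Dc_const: "(\<lambda>_. c) \<in> Dc (Suc n)"
  by (simp add: Dc_zero)

lemma Dc_mult_aux:
  "\<forall>n k f g. n + k \<le> s \<longrightarrow> f \<in> Dc n \<longrightarrow> g \<in> Dc k \<longrightarrow> (\<lambda>x. f x * g x) \<in> Dc (n + k)"
proof (induction s)
  case 0 then show ?case by auto
next
  case (Suc s)
  show ?case
  proof (intro allI impI)
    fix n k and f g :: "'a \<Rightarrow> complex"
    assume nk: "n + k \<le> Suc s" and f: "f \<in> Dc n" and g: "g \<in> Dc k"
    show "(\<lambda>x. f x * g x) \<in> Dc (n + k)"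
    proof (cases n)
      case 0 then show ?thesis using f by (simp add: Dc_zero)
    next
      case (Suc n')
      show ?thesis
      proof (cases k)
        case 0 then show ?thesis using g by (simp add: Dc_zero)
      next
        case (Suc k')
        have "\<forall>u. (\<lambda>x. f (x + u) * g (x + u) - f x * g x) \<in> Dc (n' + Suc k')"
        proof
          fix u
          have 1: "(\<lambda>x. (f (x + u) - f x) * g (x + u)) \<in> Dc (n' + Suc k')"
          proof -
            have a: "(\<lambda>x. f (x + u) - f x) \<in> Dc n'" using f \<open>n = Suc n'\<close> by simp
            have b: "(\<lambda>x. g (x + u)) \<in> Dc (Suc k')" using Dc_shift[of g k u] g \<open>k = Suc k'\<close> by simp
            have "n' + Suc k' \<le> s" using nk \<open>n = Suc n'\<close> \<open>k = Suc k'\<close> by simp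
            then show ?thesis using Suc.IH a b by blast
          qed
          have 2: "(\<lambda>x. f x * (g (x + u) - g x)) \<in> Dc (Suc n' + k')"
          proof -
            have b: "(\<lambda>x. g (x + u) - g x) \<in> Dc k'" using g \<open>k = Suc k'\<close> by simp
            have "Suc n' + k' \<le> s" using nk \<open>n = Suc n'\<close> \<open>k = Suc k'\<close> by simp
            then show ?thesis using Suc.IH f b \<open>n = Suc n'\<close> by blast
          qed
          have "(\<lambda>x. (f (x + u) - f x) * g (x + u) + f x * (g (x + u) - g x)) \<in> Dc (n' + Suc k')"
            using Dc_add[OF 1] 2 by simp
          moreover have "(\<lambda>x. (f (x + u) - f x) * g (x + u) + f x * (g (x + u) - g x)) =
              (\<lambda>x. f (x + u) * g (x + u) - f x * g x)" by (auto simp: algebra_simps)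
          ultimately show "(\<lambda>x. f (x + u) * g (x + u) - f x * g x) \<in> Dc (n' + Suc k')" by simp
        qed
        then show ?thesis using \<open>n = Suc n'\<close> \<open>k = Suc k'\<close> by simp
      qed
    qed
  qed
qed

lemma Dc_mult: "f \<in> Dc n \<Longrightarrow> g \<in> Dc k \<Longrightarrow> (\<lambda>x. f x * g x) \<in> Dc (n + k)"
  using Dc_mult_aux by blast

lemma Dc_coord:
  assumes "\<And>x u. h (x + u) = h x + h u"
  shows "h \<in> Dc 2"
proof -
  have "\<forall>u. (\<lambda>x. h (x + u) - h x) \<in> Dc 1"
    using assms by (simp add: Dc_zero)
  then show ?thesis by (simp add: numeral_2_eq_2)
qed

lemma polyfun4_Dc: "f \<in> polyfun4 \<Longrightarrow> \<exists>n. f \<in> Dc n"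
proof (induction rule: polyfun4.induct)
  case (pf_const c) then show ?case using Dc_const[of c 0] by blast
next
  case pf_X1 show ?case by (rule exI, rule Dc_coord) (auto split: prod.splits)
next
  case pf_Y1 show ?case by (rule exI, rule Dc_coord) (auto split: prod.splits)
next
  case pf_X2 show ?case by (rule exI, rule Dc_coord) (auto split: prod.splits)
next
  case pf_Y2 show ?case by (rule exI, rule Dc_coord) (auto split: prod.splits)
next
  case (pf_add f g)
  then obtain n k where "f \<in> Dc n" "g \<in> Dc k" by blast
  then have "f \<in> Dc (max n k)" "g \<in> Dc (max n k)" by (meson Dc_mono_le max.cobounded1 max.cobounded2)+
  then show ?case using Dc_add by blast
next
  case (pf_mult f g)
  then obtain n k where "f \<in> Dc n" "g \<in> Dc k" by blast
  then show ?case using Dc_mult by blast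
qed



lemma Dc_eig:
  assumes "F \<in> Dc n" "c \<noteq> 0"
    and eq: "\<And>v. c * F v = a * (F (v + da) - F v) + b * (F (v + db) - F v)"
  shows "F v = 0"
  using assms(1)
proof (induction n)
  case 0 then show ?case by simp
next
  case (Suc n)
  have "(\<lambda>v. a * (F (v + da) - F v) + b * (F (v + db) - F v)) \<in> Dc n"
    using Suc.prems by (intro Dc_lin) auto
  then have "(\<lambda>v. c * F v) \<in> Dc n" by (simp add: eq)
  then have "(\<lambda>v. inverse c * (c * F v)) \<in> Dc n" by (rule Dc_smult)
  moreover have "(\<lambda>v. inverse c * (c * F v)) = F" using \<open>c \<noteq> 0\<close> by auto
  ultimately have "F \<in> Dc n" by simp
  then show ?case by (rule Suc.IH)
qed

lemma Dc_geo:
  fixes s c :: complex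
  assumes "s \<noteq> 0" "s \<noteq> 1"
  shows "(\<lambda>m::int. c * s powi m) \<in> Dc k \<Longrightarrow> c = 0"
proof (induction k arbitrary: c)
  case 0
  then have "c * s powi 0 = 0" by (metis (mono_tags) singletonD Dc.simps(1))
  then show ?case by simp
next
  case (Suc k)
  then have "(\<lambda>m::int. c * s powi (m + 1) - c * s powi m) \<in> Dc k" by simp
  moreover have "(\<lambda>m::int. c * s powi (m + 1) - c * s powi m) = (\<lambda>m. (c * (s - 1)) * s powi m)"
    using assms by (auto simp: power_int_add_1' algebra_simps)
  ultimately have "c * (s - 1) = 0" using Suc.IH[of "c * (s - 1)"] by simp
  then show ?case using assms by simp
qed

lemma Dc_indep:
  fixes r :: complex and Q :: "int \<Rightarrow> complex"
  assumes "r \<noteq> 0" "r \<noteq> 1"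
  shows "(\<lambda>m. r powi m * Q m) \<in> Dc n \<Longrightarrow> Q \<in> Dc k \<Longrightarrow> Q m = 0"
proof (induction n arbitrary: Q m)
  case 0
  then have "r powi m * Q m = 0" by (metis (mono_tags) singletonD Dc.simps(1))
  then show ?case using assms by simp
next
  case (Suc n)
  have "(\<lambda>m. r powi (m + 1) * Q (m + 1) - r powi m * Q m) \<in> Dc n" using Suc.prems by simp
  moreover have "(\<lambda>m. r powi (m + 1) * Q (m + 1) - r powi m * Q m) =
      (\<lambda>m. r powi m * (r * Q (m + 1) - Q m))"
    using assms by (auto simp: power_int_add_1 algebra_simps)
  ultimately have A: "(\<lambda>m. r powi m * (r * Q (m + 1) - Q m)) \<in> Dc n" by simp
  have B: "(\<lambda>m. r * Q (m + 1) + (-1) * Q m) \<in> Dc k"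
    using Suc.prems Dc_shift[of Q k 1] by (intro Dc_lin) auto
  have rec: "r * Q (j + 1) = Q j" for j
    using Suc.IH[of "\<lambda>m. r * Q (m + 1) - Q m" j] A B by simp
  have closed: "Q j = Q 0 * (inverse r) powi j" for j
  proof (induction j rule: int_induct[where k=0])
    case base then show ?case by simp
  next
    case (step1 i)
    have "Q (i + 1) = inverse r * Q i" using rec[of i] assms by (auto simp: field_simps)
    also have "\<dots> = Q 0 * inverse r powi (i + 1)" using step1 assms
      by (simp add: power_int_add_1)
    finally show ?case .
  next
    case (step2 i)
    have "Q (i - 1) = r * Q i" using rec[of "i - 1"] by simp
    also have "\<dots> = Q 0 * inverse r powi (i - 1)" using step2 assms
      by (simp add: power_int_diff power_int_inverse field_simps)
    finally show ?case .
  qed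
  have "(\<lambda>m. Q 0 * (inverse r) powi m) \<in> Dc k" using Suc.prems closed
    by (metis (no_types, lifting) ext)
  then have "Q 0 = 0" using Dc_geo[of "inverse r" "Q 0" k] assms
    by (metis inverse_1 inverse_inverse_eq inverse_nonzero_iff_nonzero)
  moreover have "Q m = Q 0 * inverse r powi m" by (rule closed)
  ultimately show ?case by simp
qed



abbreviation "cx1 (v::complex\<times>complex\<times>complex\<times>complex) \<equiv> fst v"
abbreviation "cy1 (v::complex\<times>complex\<times>complex\<times>complex) \<equiv> fst (snd v)"
abbreviation "cx2 (v::complex\<times>complex\<times>complex\<times>complex) \<equiv> fst (snd (snd v))"
abbreviation "cy2 (v::complex\<times>complex\<times>complex\<times>complex) \<equiv> snd (snd (snd v))"

lemma pf_cx1: "(\<lambda>v. cx1 v) \<in> polyfun4"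
proof -
  have "(\<lambda>v. cx1 v) = (\<lambda>(x1,y1,x2,y2). x1)" by (auto simp: fun_eq_iff)
  then show ?thesis using polyfun4.pf_X1 by simp
qed
lemma pf_cy1: "(\<lambda>v. cy1 v) \<in> polyfun4"
proof -
  have "(\<lambda>v. cy1 v) = (\<lambda>(x1,y1,x2,y2). y1)" by (auto simp: fun_eq_iff)
  then show ?thesis using polyfun4.pf_Y1 by simp
qed
lemma pf_cx2: "(\<lambda>v. cx2 v) \<in> polyfun4"
proof -
  have "(\<lambda>v. cx2 v) = (\<lambda>(x1,y1,x2,y2). x2)" by (auto simp: fun_eq_iff)
  then show ?thesis using polyfun4.pf_X2 by simp
qed
lemma pf_cy2: "(\<lambda>v. cy2 v) \<in> polyfun4"
proof -
  have "(\<lambda>v. cy2 v) = (\<lambda>(x1,y1,x2,y2). y2)" by (auto simp: fun_eq_iff)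
  then show ?thesis using polyfun4.pf_Y2 by simp
qed

lemma pf_diff: "f \<in> polyfun4 \<Longrightarrow> g \<in> polyfun4 \<Longrightarrow> (\<lambda>v. f v - g v) \<in> polyfun4"
proof -
  assume f: "f \<in> polyfun4" and g: "g \<in> polyfun4"
  have "(\<lambda>v. (\<lambda>_. -1) v * g v) \<in> polyfun4" using g by (intro polyfun4.pf_mult polyfun4.pf_const)
  then have "(\<lambda>v. f v + (\<lambda>v. (\<lambda>_. -1) v * g v) v) \<in> polyfun4" using f by (intro polyfun4.pf_add)
  then show ?thesis by simp
qed

lemma pf_lin: "f \<in> polyfun4 \<Longrightarrow> g \<in> polyfun4 \<Longrightarrow> (\<lambda>v. a * f v + b * g v) \<in> polyfun4"
  by (intro polyfun4.pf_add polyfun4.pf_mult polyfun4.pf_const)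

lemma pf_subst:
  assumes "a1 \<in> polyfun4" "a2 \<in> polyfun4" "a3 \<in> polyfun4" "a4 \<in> polyfun4"
  shows "f \<in> polyfun4 \<Longrightarrow> (\<lambda>v. f (a1 v, a2 v, a3 v, a4 v)) \<in> polyfun4"
proof (induction rule: polyfun4.induct)
  case (pf_const c) then show ?case by (rule polyfun4.pf_const)
next
  case pf_X1 then show ?case using assms by simp
next
  case pf_Y1 then show ?case using assms by simp
next
  case pf_X2 then show ?case using assms by simp
next
  case pf_Y2 then show ?case using assms by simp
next
  case (pf_add f g) then show ?case using polyfun4.pf_add[OF pf_add.IH] by simp
next
  case (pf_mult f g) then show ?case using polyfun4.pf_mult[OF pf_mult.IH] by simp
qed

lemmas pf_intros = polyfun4.pf_add polyfun4.pf_mult pf_diff polyfun4.pf_const pf_cx1 pf_cy1 pf_cx2 pf_cy2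

lemma ta_L: "tensor_act (l1,e1,s1) (l2,e2,s2) (L m) F = (\<lambda>v.
   l1 powi m * (cy1 v - of_int m * cx1 v + of_int m * e1) * F (cx1 v, cy1 v - of_int m, cx2 v, cy2 v)
 + l2 powi m * (cy2 v - of_int m * cx2 v + of_int m * e2) * F (cx1 v, cy1 v, cx2 v, cy2 v - of_int m))"
  by (auto simp: fun_eq_iff tensor_act_def omega_act_def)

lemma ta_H: "tensor_act (l1,e1,s1) (l2,e2,s2) (H m) F = (\<lambda>v.
   l1 powi m * cx1 v * F (cx1 v, cy1 v - of_int m, cx2 v, cy2 v)
 + l2 powi m * cx2 v * F (cx1 v, cy1 v, cx2 v, cy2 v - of_int m))"
  by (auto simp: fun_eq_iff tensor_act_def omega_act_def)

lemma ta_I: "tensor_act (l1,e1,s1) (l2,e2,s2) (I m) F = (\<lambda>v.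
   l1 powi m * s1 * F (cx1 v - 1, cy1 v - of_int m, cx2 v, cy2 v)
 + l2 powi m * s2 * F (cx1 v, cy1 v, cx2 v - 1, cy2 v - of_int m))"
  by (auto simp: fun_eq_iff tensor_act_def omega_act_def)

lemma ta_J: "tensor_act (l1,e1,s1) (l2,e2,s2) (J m) F = (\<lambda>v. 0)"
  by (auto simp: fun_eq_iff tensor_act_def omega_act_def)

lemma ta_pf: assumes "F \<in> polyfun4" shows "tensor_act P1 P2 g F \<in> polyfun4"
proof -
  obtain l1 e1 s1 l2 e2 s2 where P: "P1 = (l1,e1,s1)" "P2 = (l2,e2,s2)" by (metis prod.exhaust)
  have S: "(\<lambda>v. F (a1 v, a2 v, a3 v, a4 v)) \<in> polyfun4"
    if "a1 \<in> polyfun4" "a2 \<in> polyfun4" "a3 \<in> polyfun4" "a4 \<in> polyfun4" for a1 a2 a3 a4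
    using pf_subst[OF that assms] .
  show ?thesis
  proof (cases g)
    case (L m) then show ?thesis unfolding P \<open>g = L m\<close> ta_L
      by (intro pf_intros S)
  next
    case (H m) then show ?thesis unfolding P \<open>g = H m\<close> ta_H
      by (intro pf_intros S)
  next
    case (I m) then show ?thesis unfolding P \<open>g = I m\<close> ta_I
      by (intro pf_intros S)
  next
    case (J m) then show ?thesis unfolding P \<open>g = J m\<close> ta_J
      by (intro pf_intros)
  qed
qed



lemma psum:
  fixes l1 l2 m1 m2 s1 s2 t1 t2 :: complex
  assumes "l1 \<noteq> l2" "m1 \<noteq> m2" "s1 \<noteq> 0" "s2 \<noteq> 0"
    and h0: "s1 + s2 = t1 + t2"
    and h1: "l1*s1 + l2*s2 = m1*t1 + m2*t2"
    and h2: "l1^2*s1 + l2^2*s2 = m1^2*t1 + m2^2*t2"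
    and h3: "l1^3*s1 + l2^3*s2 = m1^3*t1 + m2^3*t2"
  shows "(l1 = m1 \<and> s1 = t1 \<and> l2 = m2 \<and> s2 = t2) \<or> (l1 = m2 \<and> s1 = t2 \<and> l2 = m1 \<and> s2 = t1)"
proof -
  define a0 where "a0 = s1 + s2"
  define a1 where "a1 = l1*s1 + l2*s2"
  define a2 where "a2 = l1^2*s1 + l2^2*s2"
  define a3 where "a3 = l1^3*s1 + l2^3*s2"
  define e where "e = l1 + l2"
  define p where "p = l1 * l2"
  define e' where "e' = m1 + m2"
  define p' where "p' = m1 * m2"
  have r2: "a2 = e*a1 - p*a0" unfolding a0_def a1_def a2_def e_def p_def by (simp add: power2_eq_square algebra_simps)
  have r3: "a3 = e*a2 - p*a1" unfolding a3_def a1_def a2_def e_def p_def by (simp add: power2_eq_square power3_eq_cube algebra_simps)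
  have r2': "a2 = e'*a1 - p'*a0" unfolding a0_def a1_def a2_def e'_def p'_def h0 h1 h2 by (simp add: power2_eq_square algebra_simps)
  have r3': "a3 = e'*a2 - p'*a1" unfolding a3_def a1_def a2_def e'_def p'_def h1 h2 h3 by (simp add: power2_eq_square power3_eq_cube algebra_simps)
  have D: "a0*a2 - a1^2 = s1*s2*(l1-l2)^2" unfolding a0_def a1_def a2_def by (simp add: power2_eq_square algebra_simps)
  have Dnz: "a0*a2 - a1^2 \<noteq> 0" using D assms by simp
  have q1: "(e-e')*a1 = (p-p')*a0" using r2 r2' by (simp add: algebra_simps)
  have q2: "(e-e')*a2 = (p-p')*a1" using r3 r3' by (simp add: algebra_simps)
  have ee: "e = e' \<and> p = p'"
  proof (rule ccontr)
    assume ne: "\<not> (e = e' \<and> p = p')"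
    have "(e-e')^2 * (a0*a2 - a1^2) = 0"
    proof -
      have "(e-e')^2 * (a0*a2 - a1^2) = ((e-e')*a0)*((e-e')*a2) - ((e-e')*a1)^2" by (simp add: power2_eq_square algebra_simps)
      also have "\<dots> = ((e-e')*a0)*((p-p')*a1) - ((p-p')*a0)*((e-e')*a1)" using q1 q2 by (simp add: power2_eq_square)
      also have "\<dots> = 0" by (simp add: algebra_simps)
      finally show ?thesis .
    qed
    moreover have "(p-p')^2 * (a0*a2 - a1^2) = 0"
    proof -
      have "(p-p')^2 * (a0*a2 - a1^2) = ((p-p')*a0)*((p-p')*a2) - ((p-p')*a1)^2" by (simp add: power2_eq_square algebra_simps)
      also have "\<dots> = ((e-e')*a1)*((p-p')*a2) - ((e-e')*a2)*((p-p')*a1)" using q1 q2 by (simp add: power2_eq_square)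
      also have "\<dots> = 0" by (simp add: algebra_simps)
      finally show ?thesis .
    qed
    ultimately show False using ne Dnz by auto
  qed
  have z0: "(m1 - l1) * (m1 - l2) = m1^2 - e*m1 + p" unfolding e_def p_def by (simp add: power2_eq_square algebra_simps)
  have z1: "(m1 - l1) * (m1 - l2) = 0" unfolding z0 using ee unfolding e'_def p'_def by (simp add: power2_eq_square algebra_simps)
  show ?thesis
  proof (cases "m1 = l1")
    case True
    then have "m2 = l2" using ee unfolding e_def e'_def by simp
    moreover have "(s1 - t1) * (l1 - l2) = 0"
    proof -
      have "(s1 - t1) * (l1 - l2) = (l1*s1 + l2*s2 - (m1*t1 + m2*t2)) - l2*((s1 + s2) - (t1 + t2))"
        using True \<open>m2 = l2\<close> by (simp add: algebra_simps)
      then show ?thesis using h0 h1 by simp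
    qed
    ultimately show ?thesis using True h0 assms by auto
  next
    case False
    then have "m1 = l2" using z1 by simp
    then have "m2 = l1" using ee unfolding e_def e'_def by simp
    moreover have "(s1 - t2) * (l1 - l2) = 0"
    proof -
      have "(s1 - t2) * (l1 - l2) = (l1*s1 + l2*s2 - (m1*t1 + m2*t2)) - l2*((s1 + s2) - (t1 + t2))"
        using \<open>m1 = l2\<close> \<open>m2 = l1\<close> by (simp add: algebra_simps)
      then show ?thesis using h0 h1 by simp
    qed
    ultimately show ?thesis using \<open>m1 = l2\<close> h0 assms by auto
  qed
qed



definition lc :: "complex \<Rightarrow> ('a \<Rightarrow> complex) \<Rightarrow> complex \<Rightarrow> ('a \<Rightarrow> complex) \<Rightarrow> 'a \<Rightarrow> complex" where
  "lc a f b g = (\<lambda>v. a * f v + b * g v)"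

definition Gop where
  "Gop P1 P2 k F = lc 1 (tensor_act P1 P2 (L k) F) (of_int k) (tensor_act P1 P2 (H k) F)"

definition Bop where
  "Bop P1 P2 e p m F = lc 1 (lc 1 (Gop P1 P2 (m+2) F) (-e) (Gop P1 P2 (m+1) F)) p (Gop P1 P2 m F)"

lemma Bop_inv:
  fixes l1 l2 :: complex
  assumes "l1 \<noteq> 0" "l2 \<noteq> 0"
    and inv1: "\<And>v k. F (cx1 v, cy1 v - of_int k, cx2 v, cy2 v) = F v"
    and inv2: "\<And>v k. F (cx1 v, cy1 v, cx2 v, cy2 v - of_int k) = F v"
  shows "Bop (l1,e1,s1) (l2,e2,s2) (l1+l2) (l1*l2) m F =
     (\<lambda>v. ((l1-l2)*(l1 powi (m+1) * e1 - l2 powi (m+1) * e2)) * F v)"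
proof -
  have G: "Gop (l1,e1,s1) (l2,e2,s2) k F = (\<lambda>v. (l1 powi k * (cy1 v + of_int k * e1) + l2 powi k * (cy2 v + of_int k * e2)) * F v)" for k
    unfolding Gop_def lc_def ta_L ta_H inv1 inv2 by (auto simp: fun_eq_iff algebra_simps)
  show ?thesis
    unfolding Bop_def G lc_def using assms(1,2)
    by (auto simp: fun_eq_iff power_int_add algebra_simps power2_eq_square)
qed



lemma eta_alg:
  fixes l1 l2 a b a' b' :: complex
  assumes "l1 \<noteq> l2" "l1 \<noteq> 0" "l2 \<noteq> 0"
    and h0: "(l1-l2)*(l1*a - l2*b) = (l1-l2)*(l1*a' - l2*b')"
    and h1: "(l1-l2)*(l1^2*a - l2^2*b) = (l1-l2)*(l1^2*a' - l2^2*b')"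
  shows "a = a' \<and> b = b'"
proof -
  have "l1*a - l2*b = l1*a' - l2*b'" using h0 assms(1) by simp
  then have g0: "l1*(a-a') = l2*(b-b')" by (simp add: algebra_simps)
  have "l1^2*a - l2^2*b = l1^2*a' - l2^2*b'" using h1 assms(1) by simp
  then have g1: "l1^2*(a-a') = l2^2*(b-b')" by (simp add: algebra_simps)
  have "l1*(l1*(a-a')) = l2*(l1*(a-a'))"
  proof -
    have "l1*(l1*(a-a')) = l1^2*(a-a')" by (simp add: power2_eq_square)
    also have "\<dots> = l2*(l2*(b-b'))" using g1 by (simp add: power2_eq_square)
    also have "\<dots> = l2*(l1*(a-a'))" using g0 by simp
    finally show ?thesis .
  qed
  then have "(l1 - l2)*(l1*(a-a')) = 0" by (simp add: algebra_simps)
  then have "a = a'" using assms by simp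
  moreover then have "l2*(b-b') = 0" using g0 by simp
  ultimately show ?thesis using assms by simp
qed

lemma forward:
  fixes l1 l2 l1' l2' s1 s2 s1' s2' e1 e2 e1' e2' :: complex
  assumes nz: "l1 \<noteq> 0" "l2 \<noteq> 0" "l1' \<noteq> 0" "l2' \<noteq> 0"
      and snz: "s1 \<noteq> 0" "s2 \<noteq> 0" "s1' \<noteq> 0" "s2' \<noteq> 0"
      and ne: "l1 \<noteq> l2" "l1' \<noteq> l2'"
      and iso: "tensor_modules_iso (l1,e1,s1) (l2,e2,s2) (l1',e1',s1') (l2',e2',s2')"
  shows "(((l1,e1,s1) = (l1',e1',s1') \<and> (l2,e2,s2) = (l2',e2',s2'))
          \<or> ((l1,e1,s1) = (l2',e2',s2') \<and> (l2,e2,s2) = (l1',e1',s1')))"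
proof -
  obtain \<phi> where bij: "bij_betw \<phi> polyfun4 polyfun4"
    and lin: "\<forall>a b f g. f \<in> polyfun4 \<longrightarrow> g \<in> polyfun4 \<longrightarrow>
              \<phi> (\<lambda>v. a * f v + b * g v) = (\<lambda>v. a * \<phi> f v + b * \<phi> g v)"
    and com: "\<forall>x f. f \<in> polyfun4 \<longrightarrow> \<phi> (tensor_act (l1,e1,s1) (l2,e2,s2) x f) = tensor_act (l1',e1',s1') (l2',e2',s2') x (\<phi> f)"
    using iso unfolding tensor_modules_iso_def by blast
  define one :: "complex\<times>complex\<times>complex\<times>complex \<Rightarrow> complex" where "one = (\<lambda>_. 1)"
  have one_pf: "one \<in> polyfun4" unfolding one_def by (rule polyfun4.pf_const)
  define F where "F = \<phi> one"
  have F_pf: "F \<in> polyfun4" using bij_betwE[OF bij] one_pf unfolding F_def by blast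
  have phi_lc: "\<phi> (lc a f b g) = lc a (\<phi> f) b (\<phi> g)" if "f \<in> polyfun4" "g \<in> polyfun4" for a b f g
    using lin that unfolding lc_def by blast
  have lc_pf: "lc a f b g \<in> polyfun4" if "f \<in> polyfun4" "g \<in> polyfun4" for a b f g
    using that unfolding lc_def by (rule pf_lin)
  have scal: "\<phi> (\<lambda>v. c) = (\<lambda>v. c * F v)" for c
  proof -
    have "\<phi> (lc c one 0 one) = lc c (\<phi> one) 0 (\<phi> one)" using phi_lc one_pf by blast
    moreover have "lc c one 0 one = (\<lambda>v. c)" by (simp add: lc_def one_def)
    ultimately show ?thesis by (simp add: lc_def F_def)
  qed
  obtain v0 where v0: "F v0 \<noteq> 0"
  proof -
    have "F \<noteq> (\<lambda>v. 0)"
    proof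
      assume F0: "F = (\<lambda>v. 0)"
      have z: "\<phi> (\<lambda>v. 0) = (\<lambda>v. 0)" using scal[of 0] by simp
      have "(\<lambda>v::complex\<times>complex\<times>complex\<times>complex. 0::complex) \<in> polyfun4" by (rule polyfun4.pf_const)
      moreover have "inj_on \<phi> polyfun4" using bij by (rule bij_betw_imp_inj_on)
      ultimately have "one = (\<lambda>v. 0)" using one_pf F0 z unfolding F_def by (metis inj_onD)
      then show False unfolding one_def by (metis zero_neq_one)
    qed
    then have "\<exists>v. F v \<noteq> 0" by (auto simp: fun_eq_iff)
    then show ?thesis using that by blast
  qed
  have comm: "\<phi> (tensor_act (l1,e1,s1) (l2,e2,s2) x f) = tensor_act (l1',e1',s1') (l2',e2',s2') x (\<phi> f)"
    if "f \<in> polyfun4" for x f using com that by blast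
  define pm where "pm m = l1 powi m * s1 + l2 powi m * s2" for m
  define pm' where "pm' m = l1' powi m * s1' + l2' powi m * s2'" for m
  have eig: "pm m * F v = l1' powi m * s1' * F (cx1 v - 1, cy1 v - of_int m, cx2 v, cy2 v)
      + l2' powi m * s2' * F (cx1 v, cy1 v, cx2 v - 1, cy2 v - of_int m)" for m v
  proof -
    have "tensor_act (l1,e1,s1) (l2,e2,s2) (I m) one = (\<lambda>v. pm m)"
      by (simp add: ta_I one_def pm_def fun_eq_iff algebra_simps)
    then have "\<phi> (tensor_act (l1,e1,s1) (l2,e2,s2) (I m) one) = (\<lambda>v. pm m * F v)" using scal by simp
    then have "tensor_act (l1',e1',s1') (l2',e2',s2') (I m) F = (\<lambda>v. pm m * F v)"
      using comm[OF one_pf] unfolding F_def by simp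
    from fun_cong[OF this, of v] show ?thesis by (simp add: ta_I)
  qed
  obtain n where Fn: "F \<in> Dc n" using polyfun4_Dc F_pf by blast
  have shift1: "F (cx1 v - 1, cy1 v - of_int m, cx2 v, cy2 v) = F (v + (-1, - of_int m, 0, 0))" for v m
    by (cases v) simp
  have shift2: "F (cx1 v, cy1 v, cx2 v - 1, cy2 v - of_int m) = F (v + (0, 0, -1, - of_int m))" for v m
    by (cases v) simp
  have pmeq: "pm m = pm' m" for m
  proof (rule ccontr)
    assume nem: "pm m \<noteq> pm' m"
    have "(pm m - pm' m) * F v = (l1' powi m * s1') * (F (v + (-1, - of_int m, 0, 0)) - F v)
        + (l2' powi m * s2') * (F (v + (0, 0, -1, - of_int m)) - F v)" for v
      using eig[of m v] unfolding pm'_def shift1 shift2 by (simp add: algebra_simps)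
    moreover have "pm m - pm' m \<noteq> 0" using nem by simp
    ultimately have "F v0 = 0" using Dc_eig[OF Fn, where c="pm m - pm' m" and a="l1' powi m * s1'"
        and da="(-1, - of_int m, 0, 0)" and b="l2' powi m * s2'" and db="(0, 0, -1, - of_int m)" and v=v0]
      by blast
    then show False using v0 by simp
  qed
  have inv_raw: "F (v + (-1, -of_int m, 0, 0)) = F v \<and> F (v + (0,0,-1,-of_int m)) = F v" for v m
  proof -
    define A where "A = (\<lambda>m::int. s1' * (F (v + (-1, -of_int m, 0, 0)) - F v))"
    define B where "B = (\<lambda>m::int. s2' * (F (v + (0, 0, -1, -of_int m)) - F v))"
    have AB: "l1' powi k * A k + l2' powi k * B k = 0" for k
      using eig[of k v] unfolding pmeq[of k] A_def B_def pm'_def shift1 shift2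
      by (simp add: algebra_simps)
    have c1: "(\<lambda>k::int. F (v + (-1, -of_int k, 0, 0))) \<in> Dc n"
      by (rule Dc_comp[where Lf="\<lambda>w. (0, -of_int w, 0, 0)"]) (auto simp: Fn algebra_simps)
    have c2: "(\<lambda>k::int. F (v + (0, 0, -1, -of_int k))) \<in> Dc n"
      by (rule Dc_comp[where Lf="\<lambda>w. (0, 0, 0, -of_int w)"]) (auto simp: Fn algebra_simps)
    have Ad: "A \<in> Dc (Suc n)"
    proof -
      have "(\<lambda>k. s1' * F (v + (-1, -of_int k, 0, 0)) + (-s1') * (\<lambda>_. F v) k) \<in> Dc (Suc n)"
        using Dc_mono[OF c1] Dc_const by (intro Dc_lin) auto
      then show ?thesis unfolding A_def by (simp add: algebra_simps)
    qed
    have Bd: "B \<in> Dc (Suc n)"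
    proof -
      have "(\<lambda>k. s2' * F (v + (0, 0, -1, -of_int k)) + (-s2') * (\<lambda>_. F v) k) \<in> Dc (Suc n)"
        using Dc_mono[OF c2] Dc_const by (intro Dc_lin) auto
      then show ?thesis unfolding B_def by (simp add: algebra_simps)
    qed
    define r where "r = l1' / l2'"
    have rB: "(\<lambda>k. r powi k * A k) = (\<lambda>k. (-1) * B k)"
    proof
      fix k
      have "l2' powi k \<noteq> 0" using nz by simp
      then show "r powi k * A k = (-1) * B k" using AB[of k] unfolding r_def power_int_divide_distrib
        by (simp add: field_simps) (metis add.commute add_eq_0_iff2 mult.commute)
    qed
    have "(\<lambda>k. r powi k * A k) \<in> Dc (Suc n)" unfolding rB using Bd by (rule Dc_smult)
    moreover have "r \<noteq> 0" "r \<noteq> 1" using nz ne unfolding r_def by auto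
    ultimately have A0: "A k = 0" for k using Dc_indep Ad by blast
    have B0: "B k = 0" for k using AB[of k] A0[of k] nz by simp
    show ?thesis using A0[of m] B0[of m] snz unfolding A_def B_def by simp
  qed
  have inv1: "F (cx1 v, cy1 v - of_int k, cx2 v, cy2 v) = F v" for v k
  proof -
    have a: "F ((v + (1,0,0,0)) + (-1, -of_int k, 0,0)) = F (v + (1,0,0,0))" using inv_raw by blast
    have b: "F ((v + (1,0,0,0)) + (-1, -of_int 0, 0, 0)) = F (v + (1,0,0,0))" using inv_raw by blast
    show ?thesis using a b by (cases v) simp
  qed
  have inv2: "F (cx1 v, cy1 v, cx2 v, cy2 v - of_int k) = F v" for v k
  proof -
    have a: "F ((v + (0,0,1,0)) + (0, 0, -1, -of_int k)) = F (v + (0,0,1,0))" using inv_raw by blast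
    have b: "F ((v + (0,0,1,0)) + (0, 0, -1, -of_int 0)) = F (v + (0,0,1,0))" using inv_raw by blast
    show ?thesis using a b by (cases v) simp
  qed
  have ps: "(l1 = l1' \<and> s1 = s1' \<and> l2 = l2' \<and> s2 = s2') \<or> (l1 = l2' \<and> s1 = s2' \<and> l2 = l1' \<and> s2 = s1')"
  proof (rule psum)
    show "s1 + s2 = s1' + s2'" using pmeq[of 0] unfolding pm_def pm'_def by simp
    show "l1*s1 + l2*s2 = l1'*s1' + l2'*s2'" using pmeq[of 1] unfolding pm_def pm'_def by simp
    show "l1^2*s1 + l2^2*s2 = l1'^2*s1' + l2'^2*s2'" using pmeq[of 2] unfolding pm_def pm'_def by simp
    show "l1^3*s1 + l2^3*s2 = l1'^3*s1' + l2'^3*s2'" using pmeq[of 3] unfolding pm_def pm'_def by simp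
  qed (use ne snz in auto)
  have ep: "l1' + l2' = l1 + l2" "l1' * l2' = l1 * l2" using ps by auto
  have Gop_pf: "Gop P1 P2 k f \<in> polyfun4" if "f \<in> polyfun4" for P1 P2 k f
    unfolding Gop_def using that by (intro lc_pf ta_pf)
  have phi_Gop: "\<phi> (Gop (l1,e1,s1) (l2,e2,s2) k f) = Gop (l1',e1',s1') (l2',e2',s2') k (\<phi> f)"
    if "f \<in> polyfun4" for k f
    unfolding Gop_def using that by (simp add: phi_lc ta_pf comm)
  have phi_Bop: "\<phi> (Bop (l1,e1,s1) (l2,e2,s2) e p m f) = Bop (l1',e1',s1') (l2',e2',s2') e p m (\<phi> f)"
    if "f \<in> polyfun4" for e p m f
    unfolding Bop_def using that by (simp add: phi_lc lc_pf Gop_pf phi_Gop)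
  have key: "(l1-l2)*(l1 powi (m+1) * e1 - l2 powi (m+1) * e2) = (l1'-l2')*(l1' powi (m+1) * e1' - l2' powi (m+1) * e2')" for m
  proof -
    have "Bop (l1,e1,s1) (l2,e2,s2) (l1+l2) (l1*l2) m one = (\<lambda>v. ((l1-l2)*(l1 powi (m+1) * e1 - l2 powi (m+1) * e2)) * one v)"
      by (rule Bop_inv) (simp_all add: nz one_def)
    then have "\<phi> (Bop (l1,e1,s1) (l2,e2,s2) (l1+l2) (l1*l2) m one) = (\<lambda>v. ((l1-l2)*(l1 powi (m+1) * e1 - l2 powi (m+1) * e2)) * F v)"
      using scal by (simp add: one_def)
    moreover have "\<phi> (Bop (l1,e1,s1) (l2,e2,s2) (l1+l2) (l1*l2) m one) = Bop (l1',e1',s1') (l2',e2',s2') (l1'+l2') (l1'*l2') m F"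
      using phi_Bop[OF one_pf] ep unfolding F_def by simp
    moreover have "Bop (l1',e1',s1') (l2',e2',s2') (l1'+l2') (l1'*l2') m F = (\<lambda>v. ((l1'-l2')*(l1' powi (m+1) * e1' - l2' powi (m+1) * e2')) * F v)"
      by (rule Bop_inv[OF nz(3) nz(4) inv1 inv2])
    ultimately have "(\<lambda>v. ((l1-l2)*(l1 powi (m+1) * e1 - l2 powi (m+1) * e2)) * F v) = (\<lambda>v. ((l1'-l2')*(l1' powi (m+1) * e1' - l2' powi (m+1) * e2')) * F v)"
      by simp
    then show ?thesis using v0 by (metis mult_right_cancel)
  qed
  have k0: "(l1-l2)*(l1 * e1 - l2 * e2) = (l1'-l2')*(l1' * e1' - l2' * e2')" using key[of 0] by simp
  have k1: "(l1-l2)*(l1^2 * e1 - l2^2 * e2) = (l1'-l2')*(l1'^2 * e1' - l2'^2 * e2')" using key[of 1] by simp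
  from ps show ?thesis
  proof
    assume c: "l1 = l1' \<and> s1 = s1' \<and> l2 = l2' \<and> s2 = s2'"
    have "e1 = e1' \<and> e2 = e2'" using k0 k1 c ne nz by (intro eta_alg[of l1 l2]) auto
    then show ?thesis using c by simp
  next
    assume c: "l1 = l2' \<and> s1 = s2' \<and> l2 = l1' \<and> s2 = s1'"
    have h0: "(l1-l2)*(l1 * e1 - l2 * e2) = (l1-l2)*(l1 * e2' - l2 * e1')" using k0 c by (simp add: algebra_simps)
    have h1: "(l1-l2)*(l1^2 * e1 - l2^2 * e2) = (l1-l2)*(l1^2 * e2' - l2^2 * e1')" using k1 c by (simp add: algebra_simps)
    have "e1 = e2' \<and> e2 = e1'" using eta_alg[OF ne(1) nz(1) nz(2) h0 h1] .
    then show ?thesis using c by simp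
  qed
qed



lemma iso_id: "tensor_modules_iso P1 P2 P1 P2"
  unfolding tensor_modules_iso_def by (rule exI[of _ id]) (auto simp: bij_betw_id)

definition swp :: "(complex\<times>complex\<times>complex\<times>complex \<Rightarrow> complex) \<Rightarrow> complex\<times>complex\<times>complex\<times>complex \<Rightarrow> complex" where
  "swp f = (\<lambda>v. f (cx2 v, cy2 v, cx1 v, cy1 v))"

lemma swp_pf: "f \<in> polyfun4 \<Longrightarrow> swp f \<in> polyfun4"
  unfolding swp_def by (rule pf_subst[OF pf_cx2 pf_cy2 pf_cx1 pf_cy1])

lemma swp_swp: "swp (swp f) = f"
  unfolding swp_def by (auto simp: fun_eq_iff)

lemma iso_swap: "tensor_modules_iso P1 P2 P2 P1"
proof -
  obtain l1 e1 s1 l2 e2 s2 where P: "P1 = (l1,e1,s1)" "P2 = (l2,e2,s2)" by (metis prod.exhaust)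
  have bij: "bij_betw swp polyfun4 polyfun4"
    by (rule bij_betw_byWitness[where f'=swp]) (auto simp: swp_swp swp_pf)
  have lin: "swp (\<lambda>v. a * f v + b * g v) = (\<lambda>v. a * swp f v + b * swp g v)" for a b f g
    unfolding swp_def by simp
  have com: "swp (tensor_act P1 P2 x f) = tensor_act P2 P1 x (swp f)" for x f
    unfolding P swp_def by (cases x) (auto simp: fun_eq_iff ta_L ta_H ta_I ta_J)
  show ?thesis unfolding tensor_modules_iso_def using bij lin com by blast
qed


theorem theorem4p7:
  fixes l1 l2 l1' l2' s1 s2 s1' s2' e1 e2 e1' e2' :: complex
  assumes "l1 \<noteq> 0" "l2 \<noteq> 0" "l1' \<noteq> 0" "l2' \<noteq> 0"
      and "s1 \<noteq> 0" "s2 \<noteq> 0" "s1' \<noteq> 0" "s2' \<noteq> 0"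
      and "l1 \<noteq> l2" "l1' \<noteq> l2'"
  shows "tensor_modules_iso (l1,e1,s1) (l2,e2,s2) (l1',e1',s1') (l2',e2',s2') \<longleftrightarrow>
           (((l1,e1,s1) = (l1',e1',s1') \<and> (l2,e2,s2) = (l2',e2',s2'))
          \<or> ((l1,e1,s1) = (l2',e2',s2') \<and> (l2,e2,s2) = (l1',e1',s1')))"
proof
  assume "tensor_modules_iso (l1,e1,s1) (l2,e2,s2) (l1',e1',s1') (l2',e2',s2')"
  then show "(((l1,e1,s1) = (l1',e1',s1') \<and> (l2,e2,s2) = (l2',e2',s2'))
          \<or> ((l1,e1,s1) = (l2',e2',s2') \<and> (l2,e2,s2) = (l1',e1',s1')))"
    using forward[OF assms] by blast
next
  assume "(((l1,e1,s1) = (l1',e1',s1') \<and> (l2,e2,s2) = (l2',e2',s2'))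
          \<or> ((l1,e1,s1) = (l2',e2',s2') \<and> (l2,e2,s2) = (l1',e1',s1')))"
  then show "tensor_modules_iso (l1,e1,s1) (l2,e2,s2) (l1',e1',s1') (l2',e2',s2')"
  proof
    assume c: "(l1,e1,s1) = (l1',e1',s1') \<and> (l2,e2,s2) = (l2',e2',s2')"
    show ?thesis unfolding c[THEN conjunct1, symmetric] c[THEN conjunct2, symmetric] by (rule iso_id)
  next
    assume c: "(l1,e1,s1) = (l2',e2',s2') \<and> (l2,e2,s2) = (l1',e1',s1')"
    show ?thesis unfolding c[THEN conjunct1, symmetric] c[THEN conjunct2, symmetric] by (rule iso_swap)
  qed
qed

end
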